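(* Let $s,t,D\ge1$ be integers and let $\mathcal G=\{G_1,\dots,G_t\}$ be an $s$-joined graph family on $n$ vertices. Let $\mathcal H$ be a rooted $[t]$-edge-colored graph with $\Delta^{mon}(\mathcal H)\le D$ and $|V(\mathcal H)|\le n-2sD-3s$, and let $\mathcal H_0$ be a rooted subgraph obtained from $\mathcal H$ by successively removing non-root vertices of degree $1$ (roots unchanged). If $\phi_0:\mathcal H_0\hookrightarrow\mathcal G$ is a $(2s,D)$-good embedding, then there is a $(2s,D)$-good embedding $\phi:\mathcal H\hookrightarrow\mathcal G$ extending $\phi_0$.
   Context: A graph family $\mathcal G=\{G_1,\dots,G_t\}$ is a collection of $t$ simple graphs on a common finite vertex set $V$, $n=|V|$. For $X\subseteq V\times[t]$, $\Gamma_{\mathcal G}(X)=\bigcup_{(v,i)\in X}\{u\in V:uv\in E(G_i)\}$. The family is $s$-joined if for all $X\subseteq V\times[t]$ and $Y\subseteq V$ with $|X|\ge s$ and $|Y|\ge s$ there exist $(v,i)\in X$ and $y\in Y$ with $vy\in E(G_i)$. A $[t]$-edge-colored graph $\mathcal H$ is a simple graph with each edge colored in $[t]$; $H_i$ is its spanning subgraph of color-$i$ edges, $\deg_{H_i}(h)$ the number of color-$i$ edges at $h$, and $\Delta^{mon}(\mathcal H)=\max_i\max_h\deg_{H_i}(h)$. An embedding $\phi:\mathcal H\hookrightarrow\mathcal G$ is an injective map $V(\mathcal H)\to V$ with $\phi(x)\phi(y)\in E(G_i)$ for every edge $xy$ of color $i$. A rooted $[t]$-edge-colored graph is one with a distinguished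 set of roots such that, after deleting all edges with both ends roots, every connected component is a tree containing exactly one root; for a non-root $h$ the unique path from $h$ to the root set (meeting it only at its last vertex) determines the parent of $h$ (its neighbour on the path) and $c(h)$, the color of the edge from $h$ to its parent. For fixed $D$: $P_\phi(\mathcal H)=\{(\phi(h),c(h)):h\text{ non-root}\}$ and, for $X\subseteq V\times[t]$, $R(X,\phi)=|\Gamma_{\mathcal G}(X)\setminus\phi(V(\mathcal H))|-\sum_{(v,i)\in X}[D-\deg_{H_i}(\phi^{-1}(v))]-|P_\phi(\mathcal H)\cap X|$, with $\deg_{H_i}(\phi^{-1}(v))=0$ if $v\notin\phi(V(\mathcal H))$. The embedding $\phi$ is $(s,D)$-good if $R(X,\phi)\ge0$ for every $X\subseteq V\times[t]$ with $|X|\le s$. An embedding of $\mathcal H$ extends $\phi_0$ if it agrees with $\phi_0$ on $V(\mathcal H_0)$. *)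

theory Defs
  imports Main
begin

text \<open>Colours are {1..t}. A graph family on the finite vertex set V is a map
  G :: nat => 'v => 'v => bool, G i being the (symmetric, irreflexive) edge relation of G_i.\<close>

definition graph_family :: "'v set \<Rightarrow> nat \<Rightarrow> (nat \<Rightarrow> 'v \<Rightarrow> 'v \<Rightarrow> bool) \<Rightarrow> bool" where
  "graph_family V t G \<longleftrightarrow> finite V \<and>
     (\<forall>i\<in>{1..t}. \<forall>u v. G i u v \<longrightarrow> u \<in> V \<and> v \<in> V \<and> u \<noteq> v \<and> G i v u)"

definition Gamma :: "(nat \<Rightarrow> 'v \<Rightarrow> 'v \<Rightarrow> bool) \<Rightarrow> 'v set \<Rightarrow> ('v \<times> nat) set \<Rightarrow> 'v set" where
  "Gamma G V X = (\<Union>(v,i)\<in>X. {u\<in>V. G i u v})"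

definition s_joined :: "'v set \<Rightarrow> nat \<Rightarrow> (nat \<Rightarrow> 'v \<Rightarrow> 'v \<Rightarrow> bool) \<Rightarrow> nat \<Rightarrow> bool" where
  "s_joined V t G s \<longleftrightarrow>
     (\<forall>X Y. X \<subseteq> V \<times> {1..t} \<and> Y \<subseteq> V \<and> card X \<ge> s \<and> card Y \<ge> s \<longrightarrow>
        (\<exists>(v,i)\<in>X. \<exists>y\<in>Y. G i v y))"

definition colored_graph :: "nat \<Rightarrow> 'h set \<Rightarrow> ('h \<Rightarrow> 'h \<Rightarrow> bool) \<Rightarrow> ('h \<Rightarrow> 'h \<Rightarrow> nat) \<Rightarrow> bool" where
  "colored_graph t VH EH col \<longleftrightarrow> finite VH \<and>
     (\<forall>x y. EH x y \<longrightarrow> x \<in> VH \<and> y \<in> VH \<and> x \<noteq> y \<and> EH y x \<and>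
            col x y = col y x \<and> col x y \<in> {1..t})"

definition degc :: "'h set \<Rightarrow> ('h \<Rightarrow> 'h \<Rightarrow> bool) \<Rightarrow> ('h \<Rightarrow> 'h \<Rightarrow> nat) \<Rightarrow> nat \<Rightarrow> 'h \<Rightarrow> nat" where
  "degc VH EH col i h = card {y\<in>VH. EH h y \<and> col h y = i}"

definition deg :: "'h set \<Rightarrow> ('h \<Rightarrow> 'h \<Rightarrow> bool) \<Rightarrow> 'h \<Rightarrow> nat" where
  "deg VH EH h = card {y\<in>VH. EH h y}"

definition max_mono_deg_le :: "'h set \<Rightarrow> ('h \<Rightarrow> 'h \<Rightarrow> bool) \<Rightarrow> ('h \<Rightarrow> 'h \<Rightarrow> nat) \<Rightarrow> nat \<Rightarrow> nat \<Rightarrow> bool" where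
  "max_mono_deg_le VH EH col t D \<longleftrightarrow> (\<forall>i\<in>{1..t}. \<forall>h\<in>VH. degc VH EH col i h \<le> D)"

definition is_cycle :: "('h \<Rightarrow> 'h \<Rightarrow> bool) \<Rightarrow> 'h list \<Rightarrow> bool" where
  "is_cycle E cs \<longleftrightarrow> length cs \<ge> 3 \<and> distinct cs \<and>
     (\<forall>k. Suc k < length cs \<longrightarrow> E (cs ! k) (cs ! Suc k)) \<and> E (last cs) (hd cs)"

definition nonroot_edges :: "('h \<Rightarrow> 'h \<Rightarrow> bool) \<Rightarrow> 'h set \<Rightarrow> 'h \<Rightarrow> 'h \<Rightarrow> bool" where
  "nonroot_edges EH R x y \<longleftrightarrow> EH x y \<and> \<not> (x \<in> R \<and> y \<in> R)"

definition rooted :: "'h set \<Rightarrow> ('h \<Rightarrow> 'h \<Rightarrow> bool) \<Rightarrow> 'h set \<Rightarrow> bool" where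
  "rooted VH EH R \<longleftrightarrow> R \<subseteq> VH \<and>
     \<not> (\<exists>cs. is_cycle (nonroot_edges EH R) cs) \<and>
     (\<forall>x\<in>VH. \<exists>!r. r \<in> R \<and> (nonroot_edges EH R)\<^sup>*\<^sup>* x r)"

definition root_path :: "('h \<Rightarrow> 'h \<Rightarrow> bool) \<Rightarrow> 'h set \<Rightarrow> 'h \<Rightarrow> 'h list \<Rightarrow> bool" where
  "root_path EH R h ps \<longleftrightarrow> ps \<noteq> [] \<and> hd ps = h \<and> last ps \<in> R \<and> distinct ps \<and>
     set (butlast ps) \<inter> R = {} \<and> (\<forall>k. Suc k < length ps \<longrightarrow> EH (ps ! k) (ps ! Suc k))"

definition parent :: "('h \<Rightarrow> 'h \<Rightarrow> bool) \<Rightarrow> 'h set \<Rightarrow> 'h \<Rightarrow> 'h" where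
  "parent EH R h = (THE p. \<exists>ps. root_path EH R h ps \<and> ps ! 1 = p)"

definition pcol :: "('h \<Rightarrow> 'h \<Rightarrow> bool) \<Rightarrow> ('h \<Rightarrow> 'h \<Rightarrow> nat) \<Rightarrow> 'h set \<Rightarrow> 'h \<Rightarrow> nat" where
  "pcol EH col R h = col h (parent EH R h)"

definition embedding :: "'v set \<Rightarrow> (nat \<Rightarrow> 'v \<Rightarrow> 'v \<Rightarrow> bool) \<Rightarrow> 'h set \<Rightarrow> ('h \<Rightarrow> 'h \<Rightarrow> bool)
    \<Rightarrow> ('h \<Rightarrow> 'h \<Rightarrow> nat) \<Rightarrow> ('h \<Rightarrow> 'v) \<Rightarrow> bool" where
  "embedding V G VH EH col \<phi> \<longleftrightarrow> inj_on \<phi> VH \<and> \<phi> ` VH \<subseteq> V \<and>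
     (\<forall>x y. EH x y \<longrightarrow> G (col x y) (\<phi> x) (\<phi> y))"

definition Pset :: "'h set \<Rightarrow> ('h \<Rightarrow> 'h \<Rightarrow> bool) \<Rightarrow> ('h \<Rightarrow> 'h \<Rightarrow> nat) \<Rightarrow> 'h set \<Rightarrow> ('h \<Rightarrow> 'v) \<Rightarrow> ('v \<times> nat) set" where
  "Pset VH EH col R \<phi> = {(\<phi> h, pcol EH col R h) | h. h \<in> VH - R}"

text \<open>deg_{H_i}(phi^{-1}(v)), taken to be 0 if v is not in the image.\<close>
definition deg_pre :: "'h set \<Rightarrow> ('h \<Rightarrow> 'h \<Rightarrow> bool) \<Rightarrow> ('h \<Rightarrow> 'h \<Rightarrow> nat) \<Rightarrow> ('h \<Rightarrow> 'v) \<Rightarrow> nat \<Rightarrow> 'v \<Rightarrow> nat" where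
  "deg_pre VH EH col \<phi> i v =
     (if v \<in> \<phi> ` VH then degc VH EH col i (the_inv_into VH \<phi> v) else 0)"

definition Rval :: "'v set \<Rightarrow> (nat \<Rightarrow> 'v \<Rightarrow> 'v \<Rightarrow> bool) \<Rightarrow> nat \<Rightarrow> 'h set \<Rightarrow> ('h \<Rightarrow> 'h \<Rightarrow> bool)
    \<Rightarrow> ('h \<Rightarrow> 'h \<Rightarrow> nat) \<Rightarrow> 'h set \<Rightarrow> ('h \<Rightarrow> 'v) \<Rightarrow> ('v \<times> nat) set \<Rightarrow> int" where
  "Rval V G D VH EH col R \<phi> X =
     int (card (Gamma G V X - \<phi> ` VH))
     - (\<Sum>(v,i)\<in>X. int D - int (deg_pre VH EH col \<phi> i v))
     - int (card (Pset VH EH col R \<phi> \<inter> X))"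

definition good :: "'v set \<Rightarrow> (nat \<Rightarrow> 'v \<Rightarrow> 'v \<Rightarrow> bool) \<Rightarrow> nat \<Rightarrow> nat \<Rightarrow> nat \<Rightarrow> 'h set
    \<Rightarrow> ('h \<Rightarrow> 'h \<Rightarrow> bool) \<Rightarrow> ('h \<Rightarrow> 'h \<Rightarrow> nat) \<Rightarrow> 'h set \<Rightarrow> ('h \<Rightarrow> 'v) \<Rightarrow> bool" where
  "good V G t s D VH EH col R \<phi> \<longleftrightarrow>
     (\<forall>X. X \<subseteq> V \<times> {1..t} \<and> card X \<le> s \<longrightarrow> Rval V G D VH EH col R \<phi> X \<ge> 0)"

definition induced :: "('h \<Rightarrow> 'h \<Rightarrow> bool) \<Rightarrow> 'h set \<Rightarrow> 'h \<Rightarrow> 'h \<Rightarrow> bool" where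
  "induced EH W x y \<longleftrightarrow> EH x y \<and> x \<in> W \<and> y \<in> W"

inductive leaf_pruned :: "'h set \<Rightarrow> ('h \<Rightarrow> 'h \<Rightarrow> bool) \<Rightarrow> 'h set \<Rightarrow> 'h set \<Rightarrow> bool"
  for VH EH R where
  refl: "leaf_pruned VH EH R VH"
| step: "leaf_pruned VH EH R W \<Longrightarrow> h \<in> W - R \<Longrightarrow> deg W (induced EH W) h = 1
          \<Longrightarrow> leaf_pruned VH EH R (W - {h})"

end

theory Submission
  imports Defs
begin


lemma rp_single: "x \<in> R \<Longrightarrow> root_path E R x [x]"
  by (simp add: root_path_def)

lemma rp_drop:
  assumes "root_path E R a ps" "k < length ps"
  shows "root_path E R (ps!k) (drop k ps)"
  using assms unfolding root_path_def
  by (auto simp: hd_drop_conv_nth last_drop butlast_drop dest: in_set_dropD)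

lemma rp_cons:
  assumes "root_path E R y ps" "E x y" "x \<notin> set ps" "x \<notin> R"
  shows "root_path E R x (x # ps)"
proof -
  have ne: "ps \<noteq> []" and h: "hd ps = y" using assms(1) by (auto simp: root_path_def)
  show ?thesis using assms ne h unfolding root_path_def
    apply (auto simp: nth_Cons' hd_conv_nth)
    by (metis Suc_pred)
qed


lemma rp_exists_base:
  assumes "(nonroot_edges E R)\<^sup>*\<^sup>* x r" "r \<in> R"
  shows "\<exists>ps. root_path E R x ps"
  using assms(1)
proof (induction rule: converse_rtranclp_induct)
  case base
  show ?case using rp_single[OF assms(2)] by (rule exI)
next
  case (step x x')
  from step(3) obtain ps where ps: "root_path E R x' ps" by (rule exE)
  have e: "E x x'" using step(1) by (simp add: nonroot_edges_def)
  show ?case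
  proof (cases "x \<in> R")
    case True then show ?thesis using rp_single[OF True] by blast
  next
    case False
    show ?thesis
    proof (cases "x \<in> set ps")
      case True
      then obtain k where k: "k < length ps" "ps!k = x" by (meson in_set_conv_nth)
      have "root_path E R (ps!k) (drop k ps)" using rp_drop[OF ps k(1)] .
      then show ?thesis unfolding k(2) by (rule exI)
    next
      case False
      then show ?thesis using rp_cons[OF ps e _ \<open>x \<notin> R\<close>] by blast
    qed
  qed
qed

lemma rp_in_W:
  assumes "root_path (induced E W) R x ps" "x \<in> W"
  shows "set ps \<subseteq> W"
proof
  fix z assume "z \<in> set ps"
  then obtain j where j: "j < length ps" "ps!j = z" by (meson in_set_conv_nth)
  show "z \<in> W"
  proof (cases j)
    case 0 then show ?thesis using assms j by (auto simp: root_path_def hd_conv_nth)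
  next
    case (Suc i)
    then have "induced E W (ps!i) (ps!j)" using assms(1) j unfolding root_path_def by auto
    then show ?thesis using j by (simp add: induced_def)
  qed
qed


lemma rp_to_induced:
  assumes "root_path E R x ps" "set ps \<subseteq> W"
  shows "root_path (induced E W) R x ps"
proof -
  have "\<And>k. Suc k < length ps \<Longrightarrow> ps!k \<in> W \<and> ps ! Suc k \<in> W"
    using assms(2) by (meson Suc_lessD nth_mem subsetD)
  then show ?thesis using assms(1) unfolding root_path_def induced_def by blast
qed


lemma rp_mono:
  assumes "root_path (induced E W0) R x ps" "W0 \<subseteq> W"
  shows "root_path (induced E W) R x ps"
  using assms unfolding root_path_def induced_def by auto


lemma leaf_not_in_rp:
  assumes sym: "\<And>a b. E a b \<Longrightarrow> E b a"
    and d: "deg W (induced E W) h = 1" and hR: "h \<notin> R" and xh: "x \<noteq> h"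
    and rp: "root_path (induced E W) R x ps"
  shows "h \<notin> set ps"
proof
  assume "h \<in> set ps"
  then obtain k where k: "k < length ps" "ps!k = h" by (meson in_set_conv_nth)
  have ne: "ps \<noteq> []" "hd ps = x" "last ps \<in> R" "distinct ps"
    and ed: "\<And>k. Suc k < length ps \<Longrightarrow> induced E W (ps ! k) (ps ! Suc k)"
    using rp by (auto simp: root_path_def)
  have "k \<noteq> 0" using k ne xh by (metis hd_conv_nth)
  moreover have "k \<noteq> length ps - 1" using k ne hR by (metis last_conv_nth)
  ultimately obtain i where i: "k = Suc i" "Suc k < length ps" using k
    by (metis Suc_lessI diff_Suc_1 not0_implies_Suc)
  have a: "induced E W h (ps!i)" using ed[of i] i k sym by (auto simp: induced_def)
  have b: "induced E W h (ps!Suc k)" using ed[of k] i k by auto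
  have ne2: "ps!i \<noteq> ps!Suc k" using ne(4) i by (simp add: nth_eq_iff_index_eq)
  obtain z where z: "{y\<in>W. induced E W h y} = {z}"
    using d unfolding deg_def by (meson card_1_singletonE)
  have m1: "ps!i \<in> {y\<in>W. induced E W h y}" "ps!Suc k \<in> {y\<in>W. induced E W h y}"
    using a b by (auto simp: induced_def)
  have "ps!i = z" using m1(1) unfolding z by simp
  moreover have "ps!Suc k = z" using m1(2) unfolding z by simp
  ultimately show False using ne2 by simp
qed



lemma rp_from_induced: "root_path (induced E W) R x ps \<Longrightarrow> root_path E R x ps"
  unfolding root_path_def induced_def by auto

lemma lp_subset: "leaf_pruned VH EH R W \<Longrightarrow> W \<subseteq> VH"
  by (induction rule: leaf_pruned.induct) auto

lemma induced_VH: "colored_graph t VH EH col \<Longrightarrow> induced EH VH = EH"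
  unfolding colored_graph_def induced_def by (intro ext) blast

lemma cg_sym: "colored_graph t VH EH col \<Longrightarrow> EH a b \<Longrightarrow> EH b a"
  unfolding colored_graph_def by blast

lemma cg_facts: "colored_graph t VH EH col \<Longrightarrow> EH a b \<Longrightarrow> a \<in> VH \<and> b \<in> VH \<and> a \<noteq> b \<and> col a b = col b a \<and> col a b \<in> {1..t}"
  unfolding colored_graph_def by blast

lemma Gamma_Un: "Gamma G V (X \<union> Y) = Gamma G V X \<union> Gamma G V Y"
  unfolding Gamma_def by auto

lemma Gamma_mono: "X \<subseteq> Y \<Longrightarrow> Gamma G V X \<subseteq> Gamma G V Y"
  unfolding Gamma_def by auto

lemma Gamma_sub: "Gamma G V X \<subseteq> V"
  unfolding Gamma_def by auto

lemma Gamma_empty: "Gamma G V {} = {}"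
  unfolding Gamma_def by auto

lemma Gamma_mem: "u \<in> Gamma G V X \<longleftrightarrow> u \<in> V \<and> (\<exists>(v,i)\<in>X. G i u v)"
  unfolding Gamma_def by auto

lemma card_submod:
  assumes "finite A" "finite B" "C \<subseteq> A \<inter> B"
  shows "card ((A \<union> B) - S) + card (C - S) \<le> card (A - S) + card (B - S)"
proof -
  have "card (A - S) + card (B - S) = card ((A - S) \<union> (B - S)) + card ((A - S) \<inter> (B - S))"
    using assms by (intro card_Un_Int) auto
  moreover have "(A - S) \<union> (B - S) = (A \<union> B) - S" by auto
  moreover have "card (C - S) \<le> card ((A - S) \<inter> (B - S))"
    using assms by (intro card_mono) auto
  ultimately show ?thesis by simp
qed


lemma lp_rp:
  assumes cg: "colored_graph t VH EH col" and rt: "rooted VH EH R"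
    and lp: "leaf_pruned VH EH R W"
    and xW: "x \<in> W"
  shows "\<exists>ps. root_path (induced EH W) R x ps"
  using lp xW
proof (induction arbitrary: x rule: leaf_pruned.induct)
  case refl
  then obtain r where "r \<in> R" "(nonroot_edges EH R)\<^sup>*\<^sup>* x r" using rt unfolding rooted_def by blast
  then show ?case using rp_exists_base induced_VH[OF cg] by metis
next
  case (step W h x)
  then obtain ps where ps: "root_path (induced EH W) R x ps" by blast
  have "h \<notin> set ps"
  proof (rule leaf_not_in_rp[OF _ _ _ _ ps])
    show "\<And>a b. EH a b \<Longrightarrow> EH b a" using cg_sym[OF cg] by blast
    show "deg W (induced EH W) h = 1" using step.hyps by simp
    show "h \<notin> R" "x \<noteq> h" using step by auto
  qed
  moreover have "set ps \<subseteq> W" using rp_in_W[OF ps] step by auto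
  ultimately have "set ps \<subseteq> W - {h}" by auto
  then show ?case using rp_to_induced[OF rp_from_induced[OF ps]] by blast
qed


lemma Rval_submod:
  assumes "finite V" "finite X" "finite Y"
  shows "Rval V G D VH EH col R \<phi> (X \<union> Y) + Rval V G D VH EH col R \<phi> (X \<inter> Y)
       \<le> Rval V G D VH EH col R \<phi> X + Rval V G D VH EH col R \<phi> Y"
proof -
  let ?P = "Pset VH EH col R \<phi>"
  let ?g = "\<lambda>(v,i). int D - int (deg_pre VH EH col \<phi> i v)"
  have g1: "card (Gamma G V (X \<union> Y) - \<phi> ` VH) + card (Gamma G V (X \<inter> Y) - \<phi> ` VH)
     \<le> card (Gamma G V X - \<phi> ` VH) + card (Gamma G V Y - \<phi> ` VH)"
    unfolding Gamma_Un
  proof (rule card_submod)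
    show "finite (Gamma G V X)" "finite (Gamma G V Y)" using assms Gamma_sub finite_subset by metis+
    show "Gamma G V (X \<inter> Y) \<subseteq> Gamma G V X \<inter> Gamma G V Y" using Gamma_mono by (metis Int_lower1 Int_lower2 le_inf_iff)
  qed
  have g2: "sum ?g (X \<union> Y) + sum ?g (X \<inter> Y) = sum ?g X + sum ?g Y"
    using assms by (intro sum.union_inter)
  have g3: "card (?P \<inter> (X \<union> Y)) + card (?P \<inter> (X \<inter> Y)) = card (?P \<inter> X) + card (?P \<inter> Y)"
  proof -
    have "card (?P \<inter> X) + card (?P \<inter> Y) = card ((?P \<inter> X) \<union> (?P \<inter> Y)) + card ((?P \<inter> X) \<inter> (?P \<inter> Y))"
      using assms by (intro card_Un_Int) auto
    moreover have "(?P \<inter> X) \<union> (?P \<inter> Y) = ?P \<inter> (X \<union> Y)" "(?P \<inter> X) \<inter> (?P \<inter> Y) = ?P \<inter> (X \<inter> Y)" by auto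
    ultimately show ?thesis by simp
  qed
  define a1 where "a1 = int (card (Gamma G V (X \<union> Y) - \<phi> ` VH))"
  define a2 where "a2 = int (card (Gamma G V (X \<inter> Y) - \<phi> ` VH))"
  define a3 where "a3 = int (card (Gamma G V X - \<phi> ` VH))"
  define a4 where "a4 = int (card (Gamma G V Y - \<phi> ` VH))"
  define b1 where "b1 = int (card (?P \<inter> (X \<union> Y)))"
  define b2 where "b2 = int (card (?P \<inter> (X \<inter> Y)))"
  define b3 where "b3 = int (card (?P \<inter> X))"
  define b4 where "b4 = int (card (?P \<inter> Y))"
  have h1: "a1 + a2 \<le> a3 + a4" unfolding a1_def a2_def a3_def a4_def using g1 by linarith
  have h3: "b1 + b2 = b3 + b4" unfolding b1_def b2_def b3_def b4_def using g3 by linarith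
  show ?thesis unfolding Rval_def a1_def[symmetric] a2_def[symmetric] a3_def[symmetric] a4_def[symmetric]
    b1_def[symmetric] b2_def[symmetric] b3_def[symmetric] b4_def[symmetric]
    using h1 g2 h3 by linarith
qed


lemma Rval_slack:
  assumes gf: "graph_family V t G" and sj: "s_joined V t G s"
    and fW: "finite W0"
    and X: "X \<subseteq> V \<times> {1..t}" "s \<le> card X" "card X \<le> 2 * s"
    and sz: "int (card W0) + 2 * int s * int D + 3 * int s \<le> int (card V)"
  shows "Rval V G D W0 E0 col R \<phi> X \<ge> 1"
proof -
  have fV: "finite V" using gf by (simp add: graph_family_def)
  have fX: "finite X" using X(1) fV by (meson finite_SigmaI finite_atLeastAtMost finite_subset)
  let ?\<Gamma> = "Gamma G V X"
  have "card (V - ?\<Gamma>) < s"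
  proof (rule ccontr)
    assume "\<not> card (V - ?\<Gamma>) < s"
    then have "card (V - ?\<Gamma>) \<ge> s" by simp
    then have "\<exists>(a,i)\<in>X. \<exists>y\<in>V - ?\<Gamma>. G i a y"
      using sj X unfolding s_joined_def by blast
    then obtain a i y where ai: "(a,i) \<in> X" and y: "y \<in> V - ?\<Gamma>" and g: "G i a y"
      by blast
    have "i \<in> {1..t}" using X ai by auto
    then have "G i y a" using gf g unfolding graph_family_def by blast
    then have "y \<in> ?\<Gamma>" using y ai unfolding Gamma_mem by blast
    then show False using y by blast
  qed
  moreover have "card (V - ?\<Gamma>) = card V - card ?\<Gamma>" using fV Gamma_sub
    by (metis card_Diff_subset finite_subset)
  moreover have "card ?\<Gamma> \<le> card V" using fV Gamma_sub by (metis card_mono)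
  ultimately have c1: "int (card ?\<Gamma>) \<ge> int (card V) - int s + 1" by linarith
  have "card ?\<Gamma> - card (\<phi> ` W0) \<le> card (?\<Gamma> - \<phi> ` W0)" by (rule diff_card_le_card_Diff) (use fW in auto)
  moreover have "card (\<phi> ` W0) \<le> card W0" by (rule card_image_le[OF fW])
  ultimately have c2: "int (card (?\<Gamma> - \<phi> ` W0)) \<ge> int (card V) - int s + 1 - int (card W0)"
    using c1 by linarith
  have "(\<Sum>(v,i)\<in>X. int D - int (deg_pre W0 E0 col \<phi> i v)) \<le> (\<Sum>(v,i)\<in>X. int D)"
    by (intro sum_mono) auto
  also have "\<dots> = int D * int (card X)" by simp
  also have "\<dots> \<le> int D * (2 * int s)" using X(3) by (intro mult_left_mono) auto
  finally have c3: "(\<Sum>(v,i)\<in>X. int D - int (deg_pre W0 E0 col \<phi> i v)) \<le> 2 * int s * int D" by (simp add: mult_ac)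
  have "card (Pset W0 E0 col R \<phi> \<inter> X) \<le> card X" using fX by (intro card_mono) auto
  then have c4: "int (card (Pset W0 E0 col R \<phi> \<inter> X)) \<le> 2 * int s" using X(3) by linarith
  show ?thesis unfolding Rval_def using c2 c3 c4 sz by linarith
qed



lemma extend_leaf:
  assumes s1: "s \<ge> 1" and gf: "graph_family V t G" and sj: "s_joined V t G s"
    and cg: "colored_graph t VH EH col" and rt: "rooted VH EH R"
    and md: "max_mono_deg_le VH EH col t D"
    and sz: "int (card VH) \<le> int (card V) - 2 * int s * int D - 3 * int s"
    and lp: "leaf_pruned VH EH R W" and hW: "h \<in> W" and hR: "h \<notin> R"
    and dh: "deg W (induced EH W) h = 1"
    and emb: "embedding V G (W - {h}) (induced EH (W - {h})) col \<phi>"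
    and gd: "good V G t (2 * s) D (W - {h}) (induced EH (W - {h})) col R \<phi>"
  shows "\<exists>\<phi>1. embedding V G W (induced EH W) col \<phi>1 \<and> good V G t (2 * s) D W (induced EH W) col R \<phi>1
      \<and> (\<forall>x\<in>W - {h}. \<phi>1 x = \<phi> x)"
proof -
  define W0 where "W0 = W - {h}"
  define E0 where "E0 = induced EH W0"
  define E1 where "E1 = induced EH W"
  have WVH: "W \<subseteq> VH" using lp_subset[OF lp] .
  have fVH: "finite VH" using cg by (simp add: colored_graph_def)
  have fW: "finite W" using WVH fVH finite_subset by blast
  have fW0: "finite W0" using fW W0_def by simp
  have fV: "finite V" using gf by (simp add: graph_family_def)
  have W0W: "W0 \<subseteq> W" "h \<notin> W0" "W = insert h W0" using hW W0_def by auto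
  have lp0: "leaf_pruned VH EH R W0" unfolding W0_def using leaf_pruned.step[OF lp _ dh] hW hR by blast
  have sym: "\<And>a b. EH a b \<Longrightarrow> EH b a" using cg_sym[OF cg] by blast
  obtain p where pset: "{y\<in>W. E1 h y} = {p}"
    using dh unfolding deg_def E1_def by (meson card_1_singletonE)
  have nb: "\<And>z. E1 h z \<longleftrightarrow> z = p"
  proof -
    fix z
    have "E1 h z \<longleftrightarrow> z \<in> {y\<in>W. E1 h y}" by (auto simp: E1_def induced_def)
    then show "E1 h z \<longleftrightarrow> z = p" unfolding pset by simp
  qed
  have nb2: "\<And>z. E1 z h \<longleftrightarrow> z = p"
    using nb sym unfolding E1_def induced_def by blast
  have E1hp: "E1 h p" using nb by simp
  then have EHhp: "EH h p" and pW: "p \<in> W" by (auto simp: E1_def induced_def)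
  have hVH: "h \<in> VH" and pVH: "p \<in> VH" using WVH hW pW by auto
  have ph: "p \<noteq> h" and colsym: "col h p = col p h" and cT: "col h p \<in> {1..t}"
    using cg_facts[OF cg EHhp] by auto
  have pW0: "p \<in> W0" using pW ph W0_def by auto
  define c where "c = col h p"
  have c: "c \<in> {1..t}" "col p h = c" using cT colsym c_def by auto
  have E1E0: "\<And>a b. a \<noteq> h \<Longrightarrow> b \<noteq> h \<Longrightarrow> E1 a b \<longleftrightarrow> E0 a b"
    unfolding E1_def E0_def W0_def induced_def by auto
  have E0E1: "\<And>a b. E0 a b \<Longrightarrow> E1 a b"
    unfolding E1_def E0_def W0_def induced_def by auto
  have inj: "inj_on \<phi> W0" and img: "\<phi> ` W0 \<subseteq> V"
    and embE: "\<And>a b. E0 a b \<Longrightarrow> G (col a b) (\<phi> a) (\<phi> b)"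
    using emb unfolding embedding_def W0_def E0_def by auto
  define v where "v = \<phi> p"
  have vV: "v \<in> V" and vim: "v \<in> \<phi> ` W0" using img pW0 v_def by auto
  have Gsym: "\<And>i a b. i \<in> {1..t} \<Longrightarrow> G i a b \<Longrightarrow> G i b a"
    using gf unfolding graph_family_def by blast
  have GV: "\<And>i a b. i \<in> {1..t} \<Longrightarrow> G i a b \<Longrightarrow> a \<in> V \<and> b \<in> V"
    using gf unfolding graph_family_def by blast
  have finX: "\<And>X. X \<subseteq> V \<times> {1..t} \<Longrightarrow> finite X"
    using fV by (meson finite_SigmaI finite_atLeastAtMost finite_subset)
  have rp_eq: "root_path E0 R x ps \<longleftrightarrow> root_path E1 R x ps" if x: "x \<in> W0" for x ps
  proof
    assume "root_path E0 R x ps"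
    then show "root_path E1 R x ps"
      unfolding E0_def E1_def using rp_mono[OF _ W0W(1)] by blast
  next
    assume rp: "root_path E1 R x ps"
    have rp': "root_path (induced EH W) R x ps" using rp E1_def by simp
    have "x \<noteq> h" using x W0W by auto
    then have "h \<notin> set ps" using leaf_not_in_rp[OF sym dh hR _ rp'] by blast
    moreover have "set ps \<subseteq> W" using rp_in_W[OF rp'] x W0W by blast
    ultimately have "set ps \<subseteq> W0" using W0_def by blast
    then show "root_path E0 R x ps"
      unfolding E0_def by (rule rp_to_induced[OF rp_from_induced[OF rp']])
  qed
  have pcol_eq: "\<And>x. x \<in> W0 \<Longrightarrow> pcol E1 col R x = pcol E0 col R x"
  proof -
    fix x assume x: "x \<in> W0"
    have "(\<lambda>q. \<exists>ps. root_path E1 R x ps \<and> ps ! 1 = q) = (\<lambda>q. \<exists>ps. root_path E0 R x ps \<and> ps ! 1 = q)"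
      using rp_eq[OF x] by blast
    then show "pcol E1 col R x = pcol E0 col R x" unfolding pcol_def parent_def by simp
  qed
  have parent_h: "parent E1 R h = p"
    unfolding parent_def
  proof (rule the_equality)
    obtain ps0 where ps0: "root_path E0 R p ps0" using lp_rp[OF cg rt lp0 pW0] E0_def by blast
    have "set ps0 \<subseteq> W0" using rp_in_W[OF ps0[unfolded E0_def] pW0] .
    then have hps0: "h \<notin> set ps0" using W0W by auto
    have "root_path E1 R p ps0" using rp_eq[OF pW0] ps0 by simp
    then have "root_path E1 R h (h # ps0)" using rp_cons[of E1 R p ps0 h] E1hp hps0 hR by blast
    moreover have "(h # ps0) ! 1 = p" using ps0 unfolding root_path_def by (metis hd_conv_nth nth_Cons_Suc One_nat_def)
    ultimately show "\<exists>ps. root_path E1 R h ps \<and> ps ! 1 = p" by blast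
  next
    fix q assume "\<exists>ps. root_path E1 R h ps \<and> ps ! 1 = q"
    then obtain ps where rp: "root_path E1 R h ps" and q: "ps ! 1 = q" by blast
    have ne: "ps \<noteq> []" "hd ps = h" "last ps \<in> R"
      and ed: "\<And>k. Suc k < length ps \<Longrightarrow> E1 (ps ! k) (ps ! Suc k)"
      using rp unfolding root_path_def by auto
    have "length ps \<noteq> 1"
    proof
      assume "length ps = 1"
      then have "last ps = hd ps" using ne by (metis One_nat_def diff_Suc_1 hd_conv_nth last_conv_nth)
      then show False using ne hR by simp
    qed
    then have "Suc 0 < length ps" using ne by (cases ps) auto
    then have "E1 (ps ! 0) (ps ! 1)" using ed[of 0] by simp
    then have "E1 h q" using ne q by (simp add: hd_conv_nth)
    then show "q = p" using nb by simp
  qed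
  have pcol_h: "pcol E1 col R h = c" unfolding pcol_def parent_h c_def ..
  have degc_old: "degc W E1 col i x = degc W0 E0 col i x + (if x = p \<and> i = c then 1 else 0)"
    if x: "x \<in> W0" for x i
  proof -
    define S0 where "S0 = {z\<in>W0. E0 x z \<and> col x z = i}"
    have xh: "x \<noteq> h" using x W0W by auto
    have fS0: "finite S0" using fW0 S0_def by simp
    have hS0: "h \<notin> S0" using W0W S0_def by auto
    have eq: "{z\<in>W. E1 x z \<and> col x z = i} = (if x = p \<and> i = c then insert h S0 else S0)"
    proof (intro set_eqI iffI)
      fix z assume z: "z \<in> {z\<in>W. E1 x z \<and> col x z = i}"
      show "z \<in> (if x = p \<and> i = c then insert h S0 else S0)"
      proof (cases "z = h")
        case True
        then have "x = p" using z nb2 by auto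
        moreover then have "i = c" using z True c by auto
        ultimately show ?thesis using True by simp
      next
        case False
        then have "z \<in> S0" using z E1E0[OF xh False] W0_def S0_def by auto
        then show ?thesis by simp
      qed
    next
      fix z assume z: "z \<in> (if x = p \<and> i = c then insert h S0 else S0)"
      show "z \<in> {z\<in>W. E1 x z \<and> col x z = i}"
      proof (cases "z = h")
        case True
        then have "x = p \<and> i = c" using z hS0 by (auto split: if_splits)
        then show ?thesis using True nb2 c hW by auto
      next
        case False
        then have "z \<in> S0" using z by (auto split: if_splits)
        then show ?thesis using E0E1 W0W S0_def by auto
      qed
    qed
    show ?thesis unfolding degc_def eq S0_def[symmetric] using fS0 hS0 by simp
  qed
  have degc_h: "degc W E1 col i h = (if i = c then 1 else 0)" for i
  proof -
    have "{z\<in>W. E1 h z \<and> col h z = i} = (if i = c then {p} else {})"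
      using nb pW c_def by auto
    then show ?thesis unfolding degc_def by simp
  qed
  have degc_p: "degc W0 E0 col c p + 1 \<le> D"
  proof -
    define S0 where "S0 = {z\<in>W0. E0 p z \<and> col p z = c}"
    have fS0: "finite S0" using fW0 S0_def by simp
    have hS0: "h \<notin> S0" using W0W S0_def by auto
    have "insert h S0 \<subseteq> {y\<in>VH. EH p y \<and> col p y = c}"
      using sym EHhp hVH c WVH W0W unfolding S0_def E0_def induced_def by auto
    then have "card (insert h S0) \<le> degc VH EH col c p"
      unfolding degc_def using fVH by (intro card_mono) auto
    moreover have "degc VH EH col c p \<le> D" using md c pVH unfolding max_mono_deg_le_def by blast
    ultimately show ?thesis using fS0 hS0 unfolding degc_def S0_def[symmetric] by simp
  qed
  define R0 where "R0 = Rval V G D W0 E0 col R \<phi>"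
  have R0ge: "R0 X \<ge> 0" if "X \<subseteq> V \<times> {1..t}" "card X \<le> 2 * s" for X
    using gd that unfolding good_def R0_def W0_def E0_def by blast
  have cardW0: "card W0 \<le> card VH" using W0W(1) WVH fVH by (meson card_mono order_trans)
  have small: "card X < s" if X: "X \<subseteq> V \<times> {1..t}" "card X \<le> 2 * s" "R0 X = 0" for X
  proof (rule ccontr)
    assume "\<not> card X < s"
    then have "R0 X \<ge> 1" unfolding R0_def
      using Rval_slack[OF gf sj fW0 X(1) _ X(2)] cardW0 sz by simp
    then show False using X(3) by simp
  qed
  define crit where "crit = {X. X \<subseteq> V \<times> {1..t} \<and> card X \<le> 2 * s \<and> R0 X = 0 \<and> (v,c) \<notin> X}"
  have emp: "{} \<in> crit" unfolding crit_def R0_def Rval_def by (simp add: Gamma_empty)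
  have fcrit: "finite crit"
  proof (rule finite_subset)
    show "crit \<subseteq> Pow (V \<times> {1..t})" unfolding crit_def by auto
    show "finite (Pow (V \<times> {1..t}))" using fV by simp
  qed
  define m where "m = Max (card ` crit)"
  have "m \<in> card ` crit" unfolding m_def using fcrit emp by (intro Max_in) auto
  then obtain C where C: "C \<in> crit" "card C = m" by blast
  have Cmax: "card X \<le> card C" if "X \<in> crit" for X
    using C(2) m_def fcrit that by simp
  have Cprops: "C \<subseteq> V \<times> {1..t}" "card C \<le> 2 * s" "R0 C = 0" "(v,c) \<notin> C"
    using C(1) unfolding crit_def by auto
  have absorb: "X \<subseteq> C" if X: "X \<in> crit" for X
  proof -
    have Xp: "X \<subseteq> V \<times> {1..t}" "card X \<le> 2 * s" "R0 X = 0" "(v,c) \<notin> X"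
      using X unfolding crit_def by auto
    have fX: "finite X" and fC: "finite C" using finX Xp(1) Cprops(1) by auto
    have sX: "card X < s" and sC: "card C < s" using small Xp Cprops by auto
    have U: "X \<union> C \<subseteq> V \<times> {1..t}" and I: "X \<inter> C \<subseteq> V \<times> {1..t}" using Xp Cprops by auto
    have "card (X \<union> C) \<le> card X + card C" by (rule card_Un_le)
    then have cU: "card (X \<union> C) \<le> 2 * s" using sX sC by linarith
    have "card (X \<inter> C) \<le> card X" using fX by (intro card_mono) auto
    then have cI: "card (X \<inter> C) \<le> 2 * s" using sX by linarith
    have "R0 (X \<union> C) + R0 (X \<inter> C) \<le> R0 X + R0 C"
      unfolding R0_def by (rule Rval_submod[OF fV fX fC])
    moreover have "R0 (X \<union> C) \<ge> 0" "R0 (X \<inter> C) \<ge> 0" using R0ge U I cU cI by auto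
    ultimately have "R0 (X \<union> C) = 0" using Xp Cprops by linarith
    then have "X \<union> C \<in> crit" unfolding crit_def using U cU Xp Cprops by auto
    then have "card (X \<union> C) \<le> card C" by (rule Cmax)
    moreover have "card C \<le> card (X \<union> C)" using fX fC by (intro card_mono) auto
    ultimately have "card C = card (X \<union> C)" by simp
    then have "C = X \<union> C" using fX fC by (intro card_subset_eq) auto
    then have "X \<union> C = C" by simp
    then show ?thesis by blast
  qed
  have inv0: "the_inv_into W0 \<phi> (\<phi> x) = x" if "x \<in> W0" for x
    using the_inv_into_f_f[OF inj that] .
  have dpv: "deg_pre W0 E0 col \<phi> c v = degc W0 E0 col c p"
    unfolding deg_pre_def using vim inv0[OF pW0] v_def by simp
  have "\<exists>y. y \<in> V \<and> G c v y \<and> y \<notin> \<phi> ` W0 \<and> y \<notin> Gamma G V C"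
  proof (rule ccontr)
    assume neg: "\<not> ?thesis"
    have negy: "y \<in> Gamma G V C" if "y \<in> V" "G c v y" "y \<notin> \<phi> ` W0" for y
      using neg that by blast
    define C' where "C' = insert (v,c) C"
    have fC: "finite C" using finX Cprops(1) by blast
    have C'1: "C' \<subseteq> V \<times> {1..t}" using Cprops vV c C'_def by auto
    have "card C' = card C + 1" using fC Cprops(4) C'_def by simp
    moreover have "card C < s" using small Cprops by blast
    ultimately have C'2: "card C' \<le> 2 * s" by linarith
    have ge: "R0 C' \<ge> 0" using R0ge C'1 C'2 by blast
    have Geq: "Gamma G V C' - \<phi> ` W0 = Gamma G V C - \<phi> ` W0"
    proof
      show "Gamma G V C - \<phi> ` W0 \<subseteq> Gamma G V C' - \<phi> ` W0"
        using Gamma_mono[of C C' G V] C'_def by auto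
    next
      show "Gamma G V C' - \<phi> ` W0 \<subseteq> Gamma G V C - \<phi> ` W0"
      proof
        fix u assume u: "u \<in> Gamma G V C' - \<phi> ` W0"
        have u1: "u \<in> Gamma G V C'" using u by blast
        then have "u \<in> V \<and> (\<exists>(a,i)\<in>C'. G i u a)" by (simp only: Gamma_mem)
        then have uV: "u \<in> V" and ex: "\<exists>(a,i)\<in>C'. G i u a" by auto
        from ex obtain a i where ai: "(a,i) \<in> C'" "G i u a" by blast
        show "u \<in> Gamma G V C - \<phi> ` W0"
        proof (cases "(a,i) = (v,c)")
          case True
          then have "G c v u" using ai Gsym c by auto
          then have "u \<in> Gamma G V C" using negy uV u by blast
          then show ?thesis using u by blast
        next
          case False
          then have "(a,i) \<in> C" using ai C'_def by auto
          then have "u \<in> Gamma G V C" using uV ai(2) unfolding Gamma_mem by blast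
          then show ?thesis using u by blast
        qed
      qed
    qed
    let ?g = "\<lambda>(u,i). int D - int (deg_pre W0 E0 col \<phi> i u)"
    have "sum ?g C' = ?g (v,c) + sum ?g C" using fC Cprops(4) C'_def by simp
    moreover have "?g (v,c) \<ge> 1" using dpv degc_p by simp
    ultimately have sg: "sum ?g C' \<ge> sum ?g C + 1" by linarith
    have "card (Pset W0 E0 col R \<phi> \<inter> C) \<le> card (Pset W0 E0 col R \<phi> \<inter> C')"
      using fC C'_def by (intro card_mono) auto
    then have "R0 C' \<le> R0 C - 1" unfolding R0_def Rval_def Geq using sg by linarith
    then show False using ge Cprops(3) by linarith
  qed
  then obtain y where y: "y \<in> V" "G c v y" "y \<notin> \<phi> ` W0" "y \<notin> Gamma G V C" by blast
  define \<phi>1 where "\<phi>1 = \<phi>(h := y)"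
  have agree: "\<phi>1 x = \<phi> x" if "x \<in> W0" for x using that W0W \<phi>1_def by auto
  have \<phi>1h: "\<phi>1 h = y" using \<phi>1_def by simp
  have imW0: "\<phi>1 ` W0 = \<phi> ` W0" using agree by (intro image_cong) auto
  have img1: "\<phi>1 ` W = insert y (\<phi> ` W0)"
  proof -
    have "\<phi>1 ` W = insert (\<phi>1 h) (\<phi>1 ` W0)" using W0W(3) by simp
    then show ?thesis using imW0 \<phi>1h by simp
  qed
  have injW0: "inj_on \<phi>1 W0" using inj agree inj_on_cong by blast
  have inj1: "inj_on \<phi>1 W"
  proof -
    have "W0 - {h} = W0" using W0W(2) by simp
    then have "\<phi>1 h \<notin> \<phi>1 ` (W0 - {h})" using imW0 \<phi>1h y(3) by simp
    then have "inj_on \<phi>1 (insert h W0)" using injW0 by (simp only: inj_on_insert) simp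
    then show ?thesis using W0W(3) by simp
  qed
  have vy: "v \<noteq> y" using vim y(3) by blast
  have \<phi>1p: "\<phi>1 p = v" using agree pW0 v_def by simp
  have emb1: "embedding V G W E1 col \<phi>1"
    unfolding embedding_def
  proof (intro conjI allI impI)
    show "inj_on \<phi>1 W" by (rule inj1)
    show "\<phi>1 ` W \<subseteq> V" using img1 img y(1) by auto
  next
    fix a b assume ab: "E1 a b"
    show "G (col a b) (\<phi>1 a) (\<phi>1 b)"
    proof (cases "a = h")
      case True
      then have "b = p" using ab nb by simp
      then show ?thesis using True \<phi>1h \<phi>1p c_def Gsym[OF c(1) y(2)] by simp
    next
      case False
      show ?thesis
      proof (cases "b = h")
        case True
        then have "a = p" using ab nb2 by simp
        then show ?thesis using True \<phi>1h \<phi>1p c y(2) by simp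
      next
        case bh: False
        have e0: "E0 a b" using E1E0[OF False bh] ab by simp
        then have "a \<in> W0" "b \<in> W0" unfolding E0_def induced_def by auto
        then show ?thesis using embE[OF e0] agree by simp
      qed
    qed
  qed
  have dp: "deg_pre W E1 col \<phi>1 i u = deg_pre W0 E0 col \<phi> i u
      + (if (u,i) = (v,c) then 1 else 0) + (if (u,i) = (y,c) then 1 else 0)" for u i
  proof (cases "u \<in> \<phi> ` W0")
    case True
    then obtain x where x: "x \<in> W0" "u = \<phi> x" by blast
    have xW: "x \<in> W" using x W0W by auto
    have u1: "u \<in> \<phi>1 ` W" using img1 True by auto
    have inv1: "the_inv_into W \<phi>1 u = x"
      using the_inv_into_f_f[OF inj1 xW] agree[OF x(1)] x(2) by simp
    have "(\<phi> x = v) \<longleftrightarrow> x = p" using inj x(1) pW0 v_def by (meson inj_on_eq_iff)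
    moreover have "u \<noteq> y" using True y(3) by blast
    ultimately show ?thesis unfolding deg_pre_def using True u1 inv1 inv0[OF x(1)] degc_old[OF x(1)] x(2)
      by auto
  next
    case False
    show ?thesis
    proof (cases "u = y")
      case True
      have u1: "u \<in> \<phi>1 ` W" using img1 True by auto
      have inv1: "the_inv_into W \<phi>1 u = h"
        using the_inv_into_f_f[OF inj1 hW] \<phi>1h True by simp
      show ?thesis unfolding deg_pre_def using True False u1 inv1 degc_h vy by auto
    next
      case uy: False
      have "u \<notin> \<phi>1 ` W" using img1 False uy by auto
      moreover have "u \<noteq> v" using vim False by blast
      ultimately show ?thesis unfolding deg_pre_def using False uy by auto
    qed
  qed
  have Pset1: "Pset W E1 col R \<phi>1 = insert (y,c) (Pset W0 E0 col R \<phi>)"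
  proof (intro set_eqI iffI)
    fix z assume "z \<in> Pset W E1 col R \<phi>1"
    then obtain x where x: "x \<in> W - R" "z = (\<phi>1 x, pcol E1 col R x)" unfolding Pset_def by blast
    show "z \<in> insert (y,c) (Pset W0 E0 col R \<phi>)"
    proof (cases "x = h")
      case True then show ?thesis using x \<phi>1h pcol_h by simp
    next
      case False
      then have "x \<in> W0 - R" using x W0_def by auto
      then show ?thesis using x agree pcol_eq unfolding Pset_def by auto
    qed
  next
    fix z assume z: "z \<in> insert (y,c) (Pset W0 E0 col R \<phi>)"
    show "z \<in> Pset W E1 col R \<phi>1"
    proof (cases "z = (y,c)")
      case True then show ?thesis unfolding Pset_def using hW hR \<phi>1h pcol_h by force
    next
      case False
      then obtain x where x: "x \<in> W0 - R" "z = (\<phi> x, pcol E0 col R x)" using z unfolding Pset_def by blast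
      then have "z = (\<phi>1 x, pcol E1 col R x)" "x \<in> W - R" using agree pcol_eq W0W by auto
      then show ?thesis unfolding Pset_def by blast
    qed
  qed
  have ycP: "(y,c) \<notin> Pset W0 E0 col R \<phi>" using y(3) unfolding Pset_def by auto
  have ident: "Rval V G D W E1 col R \<phi>1 X = R0 X - (if y \<in> Gamma G V X then 1 else 0)
      + (if (v,c) \<in> X then 1 else 0)" if X: "X \<subseteq> V \<times> {1..t}" for X
  proof -
    have fX: "finite X" using finX X by blast
    let ?A = "Gamma G V X - \<phi> ` W0"
    have fA: "finite ?A" using finite_subset[OF Gamma_sub fV] by blast
    have eq: "Gamma G V X - \<phi>1 ` W = ?A - {y}" using img1 by auto
    have a: "int (card (Gamma G V X - \<phi>1 ` W)) = int (card ?A) - (if y \<in> Gamma G V X then 1 else 0)"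
    proof (cases "y \<in> Gamma G V X")
      case True
      then have yA: "y \<in> ?A" using y(3) by blast
      have "card (?A - {y}) = card ?A - 1" using yA by (rule card_Diff_singleton)
      moreover have "card ?A \<ge> 1" using fA yA by (metis One_nat_def card_gt_0_iff empty_iff Suc_leI)
      ultimately have "int (card (?A - {y})) = int (card ?A) - 1" by linarith
      then show ?thesis unfolding eq using True by simp
    next
      case False
      then have "?A - {y} = ?A" by blast
      then show ?thesis unfolding eq using False by simp
    qed
    let ?g0 = "\<lambda>(u,i). int D - int (deg_pre W0 E0 col \<phi> i u)"
    let ?g1 = "\<lambda>(u,i). int D - int (deg_pre W E1 col \<phi>1 i u)"
    have g: "?g1 = (\<lambda>z. ?g0 z - (if z = (v,c) then 1 else 0) - (if z = (y,c) then 1 else 0))"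
    proof
      fix z show "?g1 z = ?g0 z - (if z = (v,c) then 1 else 0) - (if z = (y,c) then 1 else 0)"
        by (cases z) (simp add: dp)
    qed
    have b: "sum ?g1 X = sum ?g0 X - (if (v,c) \<in> X then 1 else 0) - (if (y,c) \<in> X then 1 else 0)"
      unfolding g sum_subtractf using fX by (simp add: sum.delta)
    have "Pset W E1 col R \<phi>1 \<inter> X = (if (y,c) \<in> X then insert (y,c) (Pset W0 E0 col R \<phi> \<inter> X)
        else Pset W0 E0 col R \<phi> \<inter> X)" unfolding Pset1 by auto
    moreover have "finite (Pset W0 E0 col R \<phi> \<inter> X)" using fX by simp
    moreover have "(y,c) \<notin> Pset W0 E0 col R \<phi> \<inter> X" using ycP by simp
    ultimately have d: "int (card (Pset W E1 col R \<phi>1 \<inter> X)) = int (card (Pset W0 E0 col R \<phi> \<inter> X))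
       + (if (y,c) \<in> X then 1 else 0)" using ycP by simp
    show ?thesis unfolding R0_def Rval_def using a b d by linarith
  qed
  have good1: "good V G t (2 * s) D W E1 col R \<phi>1"
    unfolding good_def
  proof (intro allI impI)
    fix X assume XX: "X \<subseteq> V \<times> {1..t} \<and> card X \<le> 2 * s"
    then have X: "X \<subseteq> V \<times> {1..t}" "card X \<le> 2 * s" by auto
    have r0: "R0 X \<ge> 0" using R0ge X by blast
    show "Rval V G D W E1 col R \<phi>1 X \<ge> 0"
    proof (cases "(v,c) \<in> X")
      case True
      have "G c y v" using Gsym[OF c(1) y(2)] .
      then have "y \<in> Gamma G V X" using True y(1) unfolding Gamma_mem by blast
      then show ?thesis using ident[OF X(1)] True r0 by simp
    next
      case False
      show ?thesis
      proof (cases "R0 X = 0")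
        case True
        then have "X \<in> crit" unfolding crit_def using X False by blast
        then have "X \<subseteq> C" by (rule absorb)
        then have "y \<notin> Gamma G V X" using y(4) Gamma_mono by blast
        then show ?thesis using ident[OF X(1)] False True by simp
      next
        case nz: False
        then have "R0 X \<ge> 1" using r0 by linarith
        then show ?thesis using ident[OF X(1)] False by simp
      qed
    qed
  qed
  show ?thesis using emb1 good1 agree unfolding E1_def W0_def by blast
qed



theorem lemma2p9:
  fixes V :: "'v set" and G :: "nat \<Rightarrow> 'v \<Rightarrow> 'v \<Rightarrow> bool" and s t D :: nat
    and VH :: "'h set" and EH :: "'h \<Rightarrow> 'h \<Rightarrow> bool" and col :: "'h \<Rightarrow> 'h \<Rightarrow> nat"
    and R V0 :: "'h set" and \<phi>0 :: "'h \<Rightarrow> 'v"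
  assumes "s \<ge> 1" and "t \<ge> 1" and "D \<ge> 1"
    and "graph_family V t G"
    and "s_joined V t G s"
    and "colored_graph t VH EH col"
    and "rooted VH EH R"
    and "max_mono_deg_le VH EH col t D"
    and "int (card VH) \<le> int (card V) - 2 * int s * int D - 3 * int s"
    and "leaf_pruned VH EH R V0"
    and "embedding V G V0 (induced EH V0) col \<phi>0"
    and "good V G t (2 * s) D V0 (induced EH V0) col R \<phi>0"
  shows "\<exists>\<phi>. embedding V G VH EH col \<phi> \<and> good V G t (2 * s) D VH EH col R \<phi> \<and>
             (\<forall>x\<in>V0. \<phi> x = \<phi>0 x)"
proof -
  have main: "\<forall>\<psi>. embedding V G W (induced EH W) col \<psi> \<and> good V G t (2 * s) D W (induced EH W) col R \<psi>
      \<longrightarrow> (\<exists>\<phi>. embedding V G VH (induced EH VH) col \<phi> \<and> good V G t (2 * s) D VH (induced EH VH) col R \<phi>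
            \<and> (\<forall>x\<in>W. \<phi> x = \<psi> x))"
    if lpW: "leaf_pruned VH EH R W" for W
    using lpW
  proof (induction rule: leaf_pruned.induct)
    case refl
    then show ?case by blast
  next
    case (step W h)
    show ?case
    proof (intro allI impI)
      fix \<psi> assume a: "embedding V G (W - {h}) (induced EH (W - {h})) col \<psi> \<and>
          good V G t (2 * s) D (W - {h}) (induced EH (W - {h})) col R \<psi>"
      have hW: "h \<in> W" "h \<notin> R" using step.hyps(2) by auto
      obtain \<phi>1 where p1: "embedding V G W (induced EH W) col \<phi>1"
          "good V G t (2 * s) D W (induced EH W) col R \<phi>1" "\<forall>x\<in>W - {h}. \<phi>1 x = \<psi> x"
        using extend_leaf[OF assms(1) assms(4) assms(5) assms(6) assms(7) assms(8) assms(9)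
            step.hyps(1) hW step.hyps(3)] a by blast
      obtain \<phi> where p: "embedding V G VH (induced EH VH) col \<phi>"
          "good V G t (2 * s) D VH (induced EH VH) col R \<phi>" "\<forall>x\<in>W. \<phi> x = \<phi>1 x"
        using step.IH p1 by blast
      show "\<exists>\<phi>. embedding V G VH (induced EH VH) col \<phi> \<and> good V G t (2 * s) D VH (induced EH VH) col R \<phi>
            \<and> (\<forall>x\<in>W - {h}. \<phi> x = \<psi> x)"
      proof (intro exI conjI)
        show "embedding V G VH (induced EH VH) col \<phi>" "good V G t (2 * s) D VH (induced EH VH) col R \<phi>"
          using p by auto
        show "\<forall>x\<in>W - {h}. \<phi> x = \<psi> x" using p(3) p1(3) by simp
      qed
    qed
  qed
  show ?thesis using main[OF assms(10)] assms(11,12) induced_VH[OF assms(6)] by metis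
qed


end
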